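(* Let $X$ be a random variable on a finite alphabet $\mathcal{X}$ with pmf $P_X$, let $\mathcal{S}$ be a finite set, and let $\delta,\eta,\nu_1>0$ be such that for all sufficiently large $N$ and every $s^N\in\mathcal{S}^N$, $\Pr\{X^N\in\tilde T^N[X,s^N]_{\delta,\eta}\}>1-2^{-N\nu_1}$, where $X^N=(X_1,\dots,X_N)$ is i.i.d. with pmf $P_X$. Let $R'>\nu_1$ and $L'=2^{NR'}$, and let $\mathbf{C}=(X^N(1),\dots,X^N(L'))$ be a random codebook whose $L'N$ letters are i.i.d. with pmf $P_X$. Then $\Pr\{\mathbf{C}\text{ is good with respect to }X\}>1-\epsilon_1$, where $\epsilon_1\to0$ as $N\to\infty$.
   Context: For $s^N\in\mathcal{S}^N$ and $a\in\mathcal{S}$, $\mathcal{I}(a:s^N)=\{1\le i\le N: s_i=a\}$, $\mu_a=|\mathcal{I}(a:s^N)|$, and $\mathcal{S}(s^N,\eta)=\{a\in\mathcal{S}:\mu_a>N\eta/|\mathcal{S}|\}$. For a pmf $P$ on a finite set $\mathcal{A}$, the $\delta$-letter typical set $T^n_\delta(P)$ is the set of $a^n\in\mathcal{A}^n$ with $|\frac1nN(b:a^n)-P(b)|\le\delta P(b)$ for all $b\in\mathcal{A}$, where $N(b:a^n)$ is the number of positions of $a^n$ equal to $b$. The set $\tilde T^N[X,s^N]_{\delta,\eta}$ consists of all $x^N\in\mathcal{X}^N$ with $P_X(x_i)>0$ for all $i$ and $x_{\mathcal{I}(a:s^N)}=(x_i)_{i\in\mathcal{I}(a:s^N)}\in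 T^{\mu_a}_\delta(P_X)$ for all $a\in\mathcal{S}(s^N,\eta)$. A codebook $\mathcal{C}=(x^N(l))_{l=1}^{L'}$ (an indexed list, repetitions allowed) is called good with respect to $X$ (with parameters $\delta,\eta,\nu_1$) if for every $s^N\in\mathcal{S}^N$ the number of indices $l$ with $x^N(l)\in\tilde T^N[X,s^N]_{\delta,\eta}$ exceeds $(1-2\cdot2^{-N\nu_1})L'$. *)

theory Defs
  imports "HOL-Probability.Probability"
begin

text \<open>Sequences of length N are functions on nat, only indices below N matter.\<close>

definition idx_set :: "'s \<Rightarrow> (nat \<Rightarrow> 's) \<Rightarrow> nat \<Rightarrow> nat set" where
  "idx_set a s N = {i. i < N \<and> s i = a}"

definition mu :: "'s \<Rightarrow> (nat \<Rightarrow> 's) \<Rightarrow> nat \<Rightarrow> nat" where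
  "mu a s N = card (idx_set a s N)"

definition heavy_states :: "(nat \<Rightarrow> 's::finite) \<Rightarrow> nat \<Rightarrow> real \<Rightarrow> 's set" where
  "heavy_states s N \<eta> = {a. real (mu a s N) > real N * \<eta> / real (card (UNIV :: 's set))}"

definition letter_typical :: "nat \<Rightarrow> real \<Rightarrow> 'a pmf \<Rightarrow> 'a list set" where
  "letter_typical n \<delta> P = {as. length as = n \<and>
     (\<forall>b. \<bar>real (length (filter (\<lambda>c. c = b) as)) / real n - pmf P b\<bar> \<le> \<delta> * pmf P b)}"

definition cond_typical :: "'x pmf \<Rightarrow> (nat \<Rightarrow> 's::finite) \<Rightarrow> nat \<Rightarrow> real \<Rightarrow> real \<Rightarrow> (nat \<Rightarrow> 'x) set" where
  "cond_typical P s N \<delta> \<eta> = {x. (\<forall>i<N. pmf P (x i) > 0) \<and>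
     (\<forall>a\<in>heavy_states s N \<eta>.
        map x (sorted_list_of_set (idx_set a s N)) \<in> letter_typical (mu a s N) \<delta> P)}"

definition good_codebook :: "'x pmf \<Rightarrow> 's::finite itself \<Rightarrow> nat \<Rightarrow> nat \<Rightarrow> real \<Rightarrow> real \<Rightarrow> real
      \<Rightarrow> (nat \<Rightarrow> nat \<Rightarrow> 'x) \<Rightarrow> bool" where
  "good_codebook P _ N L \<delta> \<eta> \<nu>1 C \<longleftrightarrow>
     (\<forall>s :: nat \<Rightarrow> 's. real (card {l. l < L \<and> C l \<in> cond_typical P s N \<delta> \<eta>})
        > (1 - 2 * 2 powr (- (real N * \<nu>1))) * real L)"

definition iid_seq :: "'x pmf \<Rightarrow> nat \<Rightarrow> (nat \<Rightarrow> 'x) pmf" where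
  "iid_seq P N = Pi_pmf {..<N} undefined (\<lambda>_. P)"

definition random_codebook :: "'x pmf \<Rightarrow> nat \<Rightarrow> nat \<Rightarrow> (nat \<Rightarrow> nat \<Rightarrow> 'x) pmf" where
  "random_codebook P N L = Pi_pmf {..<L} undefined (\<lambda>_. iid_seq P N)"

end

theory Submission imports Defs "HOL-Real_Asymp.Real_Asymp" begin

lemma idx_set_restrict: "idx_set a (\<lambda>i. if i < N then s i else a0) N = idx_set a s N"
  unfolding idx_set_def by auto

lemma cond_typical_restrict:
  "cond_typical P (\<lambda>i. if i < N then s i else a0) N \<delta> \<eta> = cond_typical P s N \<delta> \<eta>"
  unfolding cond_typical_def heavy_states_def mu_def idx_set_restrict by simp

lemma expect_f:
  "measure_pmf.expectation M (\<lambda>w. if w \<in> T then 1 else (2::real)) = 1 + measure_pmf.prob M (-T)"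
proof -
  have "(\<lambda>w. if w \<in> T then 1 else (2::real)) = (\<lambda>w. 1 + indicator (-T) w)"
    by (auto simp: indicator_def fun_eq_iff)
  moreover have "measure_pmf.expectation M (\<lambda>w. 1 + indicator (-T) w) = measure_pmf.expectation M (\<lambda>_. 1::real) + measure_pmf.expectation M (indicator (-T) :: _ \<Rightarrow> real)"
    by (rule Bochner_Integration.integral_add) (auto intro!: measure_pmf.integrable_const_bound[where B=1])
  ultimately show ?thesis by simp
qed

lemma markov_bound:
  fixes T :: "(nat \<Rightarrow> 'x) set"
  shows "measure_pmf.prob (random_codebook P N L) {C. real (card {l. l < L \<and> C l \<notin> T}) \<ge> t}
     \<le> exp (measure_pmf.prob (iid_seq P N) (-T) * real L) / 2 powr t"
proof -
  define q where "q = measure_pmf.prob (iid_seq P N) (-T)"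
  define Y where "Y = (\<lambda>C::nat \<Rightarrow> nat \<Rightarrow> 'x. \<Prod>l\<in>{..<L}. (if C l \<in> T then 1 else (2::real)))"
  have Y_eq: "Y C = 2 ^ card {l. l < L \<and> C l \<notin> T}" for C
  proof -
    have "Y C = (\<Prod>l\<in>{..<L} \<inter> {l. C l \<notin> T}. 2) * (\<Prod>l\<in>{..<L} \<inter> - {l. C l \<notin> T}. 1)"
      unfolding Y_def by (subst prod.If_cases[symmetric]) (auto intro!: prod.cong)
    also have "{..<L} \<inter> {l. C l \<notin> T} = {l. l < L \<and> C l \<notin> T}" by auto
    finally show ?thesis by simp
  qed
  have sub: "{C. real (card {l. l < L \<and> C l \<notin> T}) \<ge> t} \<subseteq> {C \<in> space (measure_pmf (random_codebook P N L)). Y C \<ge> 2 powr t}"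
  proof
    fix C assume "C \<in> {C. real (card {l. l < L \<and> C l \<notin> T}) \<ge> t}"
    then have "2 powr t \<le> 2 powr real (card {l. l < L \<and> C l \<notin> T})" by simp
    also have "\<dots> = Y C" by (simp add: Y_eq powr_realpow)
    finally show "C \<in> {C \<in> space (measure_pmf (random_codebook P N L)). Y C \<ge> 2 powr t}" by simp
  qed
  have int: "integrable (measure_pmf (random_codebook P N L)) Y"
    unfolding random_codebook_def Y_def
    by (rule integrable_prod_Pi_pmf) (auto intro!: measure_pmf.integrable_const_bound[where B=2])
  have EY: "measure_pmf.expectation (random_codebook P N L) Y = (1 + q) ^ L"
    unfolding random_codebook_def Y_def q_def
    by (subst expectation_prod_Pi_pmf) (auto intro!: measure_pmf.integrable_const_bound[where B=2] simp: expect_f)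
  have "measure_pmf.prob (random_codebook P N L) {C. real (card {l. l < L \<and> C l \<notin> T}) \<ge> t}
     \<le> measure_pmf.prob (random_codebook P N L) {C \<in> space (measure_pmf (random_codebook P N L)). Y C \<ge> 2 powr t}"
    by (rule measure_pmf.finite_measure_mono[OF sub]) simp
  also have "\<dots> \<le> measure_pmf.expectation (random_codebook P N L) Y / 2 powr t"
    by (rule integral_Markov_inequality_measure[OF int, where A="{}"]) (auto simp: Y_def intro!: prod_nonneg)
  also have "\<dots> = (1 + q) ^ L / 2 powr t" by (simp add: EY)
  also have "(1 + q) ^ L \<le> exp q ^ L"
    by (rule power_mono) (use exp_ge_add_one_self[of q] in \<open>auto simp: q_def\<close>)
  also have "exp q ^ L = exp (q * real L)" by (simp add: exp_of_nat2_mult mult.commute)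
  finally show ?thesis by (simp add: q_def divide_right_mono)
qed

lemma prob_compl_pmf: "measure_pmf.prob M (-A) = 1 - measure_pmf.prob M A"
proof -
  have "-A = space (measure_pmf M) - A" by auto
  then show ?thesis using measure_pmf.prob_compl[of A M] by simp
qed

lemma ln2_gt: "ln (2::real) > 1/2"
proof -
  have "exp (1/2::real) * exp (1/2) = exp 1" by (simp flip: exp_add)
  also have "\<dots> < 4" using exp_le by linarith
  finally have lt4: "exp (1/2::real) * exp (1/2) < 4" .
  have "exp (1/2::real) < 2"
  proof (rule ccontr)
    assume "\<not> exp (1/2::real) < 2"
    then have "2 \<le> exp (1/2::real)" by simp
    then have "2 * 2 \<le> exp (1/2::real) * exp (1/2)" using mult_mono by fastforce
    with lt4 show False by simp
  qed
  then have "exp (1/2::real) < exp (ln 2)" by simp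
  then show ?thesis by (simp only: exp_less_cancel_iff)
qed

lemma lim_aux: "c > 0 \<Longrightarrow> b > 0 \<Longrightarrow> ((\<lambda>x::real. exp (x * a - c * exp (x * b))) \<longlongrightarrow> 0) at_top"
  by real_asymp

lemma lim_inv: "(\<lambda>N::nat. 1 / (real N + 1)) \<longlonglongrightarrow> 0"
  by real_asymp

theorem lemma1:
  fixes P :: "'x::finite pmf" and \<delta> \<eta> \<nu>1 R' :: real
  assumes "\<delta> > 0" and "\<eta> > 0" and "\<nu>1 > 0"
    and hyp: "\<exists>N0. \<forall>N\<ge>N0. \<forall>s :: nat \<Rightarrow> 's::finite.
       measure_pmf.prob (iid_seq P N) (cond_typical P s N \<delta> \<eta>) > 1 - 2 powr (- (real N * \<nu>1))"
    and "R' > \<nu>1"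
  shows "\<exists>\<epsilon>1 :: nat \<Rightarrow> real. \<epsilon>1 \<longlonglongrightarrow> 0 \<and>
    (\<forall>N. measure_pmf.prob (random_codebook P N (nat \<lfloor>2 powr (real N * R')\<rfloor>))
            {C. good_codebook P TYPE('s) N (nat \<lfloor>2 powr (real N * R')\<rfloor>) \<delta> \<eta> \<nu>1 C}
          > 1 - \<epsilon>1 N)"
proof -
  obtain N0 where N0: "\<And>N s. N \<ge> N0 \<Longrightarrow>
       measure_pmf.prob (iid_seq P N) (cond_typical P (s :: nat \<Rightarrow> 's) N \<delta> \<eta>) > 1 - 2 powr (- (real N * \<nu>1))"
    using hyp by blast
  define c :: real where "c = 2 * ln 2 - 1"
  define d where "d = R' - \<nu>1"
  define k where "k = real CARD('s)"
  define B where "B N = k ^ N * exp (- (c * (2 powr (real N * d) - 1)))" for N :: nat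
  define \<epsilon> where "\<epsilon> N = (if N0 \<le> N then B N else 2) + 1 / (real N + 1)" for N :: nat
  have c_pos: "c > 0" using ln2_gt by (simp add: c_def)
  have d_pos: "d > 0" using assms by (simp add: d_def)
  have k_pos: "k > 0" by (simp add: k_def)
  have B_alt: "B N = exp c * exp (real N * ln k - c * exp (real N * (d * ln 2)))" for N
  proof -
    have "k ^ N = exp (real N * ln k)" using k_pos
      by (simp add: powr_def flip: powr_realpow)
    moreover have "2 powr (real N * d) = exp (real N * (d * ln 2))" by (simp add: powr_def)
    ultimately show ?thesis unfolding B_def
      by (simp add: algebra_simps flip: exp_add)
  qed
  have "(\<lambda>N. exp (real N * ln k - c * exp (real N * (d * ln 2)))) \<longlonglongrightarrow> 0"
    using filterlim_compose[OF lim_aux[OF c_pos, of "d * ln 2" "ln k"] filterlim_real_sequentially] d_pos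
    by (simp add: o_def)
  then have "(\<lambda>N. exp c * exp (real N * ln k - c * exp (real N * (d * ln 2)))) \<longlonglongrightarrow> exp c * 0"
    by (rule tendsto_mult_left)
  moreover have "B = (\<lambda>N. exp c * exp (real N * ln k - c * exp (real N * (d * ln 2))))"
    using B_alt by (simp add: fun_eq_iff)
  ultimately have B_lim: "B \<longlonglongrightarrow> 0" by simp
  have "(\<lambda>N. B N + 1 / (real N + 1)) \<longlonglongrightarrow> 0 + 0"
    by (rule tendsto_add[OF B_lim lim_inv])
  then have "(\<lambda>N. B N + 1 / (real N + 1)) \<longlonglongrightarrow> 0" by simp
  then have lim: "\<epsilon> \<longlonglongrightarrow> 0"
  proof (rule Lim_transform_eventually)
    show "\<forall>\<^sub>F N in sequentially. B N + 1 / (real N + 1) = \<epsilon> N"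
      using eventually_ge_at_top[of N0] by eventually_elim (simp add: \<epsilon>_def)
  qed
  have main: "measure_pmf.prob (random_codebook P N (nat \<lfloor>2 powr (real N * R')\<rfloor>))
            {C. good_codebook P TYPE('s) N (nat \<lfloor>2 powr (real N * R')\<rfloor>) \<delta> \<eta> \<nu>1 C}
          > 1 - \<epsilon> N" for N
  proof (cases "N0 \<le> N")
    case False
    have h: "1 / (real N + 1) \<ge> 0" by simp
    have "\<epsilon> N = 2 + 1 / (real N + 1)" by (simp add: \<epsilon>_def False)
    with h have "1 - \<epsilon> N < 0" by linarith
    then show ?thesis using measure_nonneg less_le_trans by blast
  next
    case True
    define L where "L = nat \<lfloor>2 powr (real N * R')\<rfloor>"
    define p :: real where "p = 2 powr (- (real N * \<nu>1))"
    define T where "T s = cond_typical P (s :: nat \<Rightarrow> 's) N \<delta> \<eta>" for s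
    define SS where "SS = PiE_dflt {..<N} (undefined :: 's) (\<lambda>_. UNIV)"
    define Bad where "Bad s = {C :: nat \<Rightarrow> nat \<Rightarrow> 'x. real (card {l. l < L \<and> C l \<notin> T s}) \<ge> 2 * p * real L}" for s
    define G where "G = {C. good_codebook P TYPE('s) N L \<delta> \<eta> \<nu>1 C}"
    let ?M = "random_codebook P N L"
    have p_pos: "p > 0" by (simp add: p_def)
    have p_le1: "p \<le> 1" unfolding p_def using powr_mono[of "-(real N*\<nu>1)" 0 2] assms(3) by simp
    have SS_fin: "finite SS" unfolding SS_def by (rule finite_PiE_dflt) auto
    have SS_card: "real (card SS) = k ^ N" unfolding SS_def k_def
      by (subst card_PiE_dflt) auto
    have sub: "- G \<subseteq> (\<Union>s\<in>SS. Bad s)"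
    proof
      fix C assume "C \<in> - G"
      then obtain s :: "nat \<Rightarrow> 's" where
        s: "\<not> real (card {l. l < L \<and> C l \<in> T s}) > (1 - 2 * 2 powr (- (real N * \<nu>1))) * real L"
        by (auto simp: G_def good_codebook_def T_def)
      define s' where "s' = (\<lambda>i. if i < N then s i else undefined)"
      have s'SS: "s' \<in> SS" by (auto simp: SS_def PiE_dflt_def s'_def)
      have Ts: "T s' = T s" unfolding T_def s'_def by (rule cond_typical_restrict)
      have "{l. l < L \<and> C l \<in> T s} \<union> {l. l < L \<and> C l \<notin> T s} = {..<L}" by auto
      moreover have "card ({l. l < L \<and> C l \<in> T s} \<union> {l. l < L \<and> C l \<notin> T s}) =
          card {l. l < L \<and> C l \<in> T s} + card {l. l < L \<and> C l \<notin> T s}"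
        by (rule card_Un_disjoint) auto
      ultimately have "card {l. l < L \<and> C l \<in> T s} + card {l. l < L \<and> C l \<notin> T s} = L" by simp
      then have "real (card {l. l < L \<and> C l \<notin> T s}) = real L - real (card {l. l < L \<and> C l \<in> T s})"
        by linarith
      with s have "C \<in> Bad s" unfolding Bad_def p_def by (simp add: algebra_simps)
      then have "C \<in> Bad s'" using Ts by (simp add: Bad_def)
      with s'SS show "C \<in> (\<Union>s\<in>SS. Bad s)" by blast
    qed
    have pL: "p * real L \<ge> 2 powr (real N * d) - 1"
    proof -
      have "real L = of_int \<lfloor>2 powr (real N * R')\<rfloor>" unfolding L_def by simp
      then have "real L \<ge> 2 powr (real N * R') - 1" by linarith
      then have "p * real L \<ge> p * (2 powr (real N * R') - 1)" using p_pos by (simp add: mult_left_mono)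
      moreover have "p * 2 powr (real N * R') = 2 powr (real N * d)"
        by (simp add: p_def d_def flip: powr_add) (simp add: algebra_simps)
      ultimately show ?thesis using p_le1 by (simp add: algebra_simps)
    qed
    have each: "measure_pmf.prob ?M (Bad s) \<le> exp (- (c * (2 powr (real N * d) - 1)))" for s
    proof -
      have q: "measure_pmf.prob (iid_seq P N) (- T s) < p"
        using N0[OF True, of s] unfolding T_def p_def
        by (simp add: prob_compl_pmf)
      have "measure_pmf.prob ?M (Bad s) \<le> exp (measure_pmf.prob (iid_seq P N) (- T s) * real L) / 2 powr (2 * p * real L)"
        unfolding Bad_def by (rule markov_bound)
      also have "\<dots> \<le> exp (p * real L) / 2 powr (2 * p * real L)"
        using q by (intro divide_right_mono) (auto intro!: mult_right_mono)
      also have "2 powr (2 * p * real L) = exp (2 * ln 2 * (p * real L))"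
        by (simp add: powr_def mult_ac)
      also have "exp (p * real L) / exp (2 * ln 2 * (p * real L)) = exp (p * real L - 2 * ln 2 * (p * real L))"
        by (rule exp_diff[symmetric])
      also have "p * real L - 2 * ln 2 * (p * real L) = - (c * (p * real L))"
        by (simp add: c_def algebra_simps)
      also have "exp (- (c * (p * real L))) \<le> exp (- (c * (2 powr (real N * d) - 1)))"
        using mult_left_mono[OF pL, of c] c_pos by simp
      finally show ?thesis .
    qed
    have "measure_pmf.prob ?M (- G) \<le> measure_pmf.prob ?M (\<Union>s\<in>SS. Bad s)"
      by (rule measure_pmf.finite_measure_mono[OF sub]) simp
    also have "\<dots> \<le> (\<Sum>s\<in>SS. measure_pmf.prob ?M (Bad s))"
      by (rule measure_pmf.finite_measure_subadditive_finite[OF SS_fin]) simp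
    also have "\<dots> \<le> (\<Sum>s\<in>SS. exp (- (c * (2 powr (real N * d) - 1))))"
      by (rule sum_mono[OF each])
    also have "\<dots> = B N" by (simp add: B_def SS_card)
    finally have "measure_pmf.prob ?M (- G) \<le> B N" .
    moreover have "measure_pmf.prob ?M (- G) = 1 - measure_pmf.prob ?M G"
      by (rule prob_compl_pmf)
    ultimately have "measure_pmf.prob ?M G \<ge> 1 - B N" by linarith
    moreover have "1 / (real N + 1) > 0" by simp
    moreover have "\<epsilon> N = B N + 1 / (real N + 1)" by (simp add: \<epsilon>_def True)
    ultimately have "measure_pmf.prob ?M G > 1 - \<epsilon> N" by linarith
    then show ?thesis unfolding G_def L_def .
  qed
  show ?thesis using lim main by blast
qed

end
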